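(* Let $1<p<\infty$ and let $(X,d,\mu)$ be a $K$-regular tree as described in the context. Then $X$ is $p$-parabolic if and only if $\mathrm{Cap}_p(X^n)=0$ for all $n\in\mathbb{N}\cup\{0\}$.
   Context: A $K$-regular tree ($K\ge1$ an integer) is a rooted tree (root $0$) in which every vertex has exactly $K$ children; $X$ is the union of its vertices and edges, each edge an isometric copy of $[0,1]$. $|x|$ is the graph distance from $0$ to $x$, $[y,z]$ the unique geodesic between $y,z$. Let $\lambda,\mu:[0,\infty)\to(0,\infty)$ be locally integrable with $\lambda^p\mu^{-1}\in L^{1/(p-1)}_{\mathrm{loc}}([0,\infty))$; $d\mu(x)=\mu(|x|)\,d|x|$, $d(y,z)=\int_{[y,z]}\lambda(|x|)\,d|x|$ ($d|x|$ gives each edge Lebesgue measure $1$), $ds=\lambda(|x|)\,d|x|$. $X^n=\{x:|x|\le n\}$. An upper gradient of $u$ is a Borel $g\ge0$ with $|u(y)-u(z)|\le\int_{[y,z]}g\,ds$ for all $y,z$; $N^{1,p}(X)$ is the space of $u$ with finite $\|u\|_{L^p(X)}+\inf_g\|g\|_{L^p(X)}$; $g_u$ is the minimal upper gradient; $N^{1,p}_0(X)$ is the closure in $N^{1,p}(X)$ of compactly supported functions. $\mathrm{Cap}_p(O)=\inf\{\int_Xg_u^p\,d\mu:u\in N^{1,p}_0(X),u\equiv1\text{ on }O\}$. $X$ is $p$-parabolic if $\mathrm{Cap}_p(O)=0$ for every compact $O\subset(X,d)$. *)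

theory Defs
  imports "HOL-Analysis.Analysis" "HOL-Library.Sublist"
begin

(* A vertex is a list of child indices (< K); the root is [].
   A point is a pair (v,t): for v \<noteq> [] it is the point on the edge from the parent of v to v
   at graph distance t \<in> (0,1] from the parent (t = 1 is the vertex v itself).
   The root is encoded as ([],1). *)
type_synonym pt = "nat list \<times> real"

definition tree_pts :: "nat \<Rightarrow> pt set" where
  "tree_pts K = {(v,t). set v \<subseteq> {..<K} \<and> 0 < t \<and> t \<le> 1 \<and> (v = [] \<longrightarrow> t = 1)}"

definition tree_root :: pt where "tree_root = ([], 1)"

(* non-root vertices, i.e. (lower endpoints of) edges *)
definition tree_edges :: "nat \<Rightarrow> nat list set" where
  "tree_edges K = {v. set v \<subseteq> {..<K} \<and> v \<noteq> []}"

definition height :: "pt \<Rightarrow> real" where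
  "height x = real (length (fst x)) - 1 + snd x"

definition on_root_path :: "pt \<Rightarrow> pt \<Rightarrow> bool" where
  "on_root_path x y \<longleftrightarrow> fst x = [] \<or> (prefix (fst x) (fst y) \<and> (fst x = fst y \<longrightarrow> snd x \<le> snd y))"

definition root_geod :: "nat \<Rightarrow> pt \<Rightarrow> pt set" where
  "root_geod K y = {x \<in> tree_pts K. on_root_path x y}"

definition geod :: "nat \<Rightarrow> pt \<Rightarrow> pt \<Rightarrow> pt set" where
  "geod K y z = (root_geod K y - root_geod K z) \<union> (root_geod K z - root_geod K y)
      \<union> {m \<in> root_geod K y \<inter> root_geod K z. \<forall>x \<in> root_geod K y \<inter> root_geod K z. on_root_path x m}"

(* integral over S with respect to d|x| (Lebesgue measure 1 on each edge) *)
definition line_int :: "nat \<Rightarrow> (pt \<Rightarrow> ennreal) \<Rightarrow> pt set \<Rightarrow> ennreal" where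
  "line_int K f S = (\<integral>\<^sup>+ v. (\<integral>\<^sup>+ t. f (v,t) * indicator S (v,t) * indicator {0<..1} t \<partial>lborel)
                        \<partial>count_space (tree_edges K))"

definition tree_dist :: "nat \<Rightarrow> (real \<Rightarrow> real) \<Rightarrow> pt \<Rightarrow> pt \<Rightarrow> real" where
  "tree_dist K lam y z = enn2real (line_int K (\<lambda>x. ennreal (lam (height x))) (geod K y z))"

definition tree_top :: "nat \<Rightarrow> (real \<Rightarrow> real) \<Rightarrow> pt topology" where
  "tree_top K lam = Metric_space.mtopology (tree_pts K) (tree_dist K lam)"

(* Borel measurability on X (X is a countable union of edges) *)
definition edge_borel :: "nat \<Rightarrow> (pt \<Rightarrow> real) \<Rightarrow> bool" where
  "edge_borel K f \<longleftrightarrow> (\<forall>v \<in> tree_edges K. (\<lambda>t. f (v,t)) \<in> borel_measurable (restrict_space borel {0<..1}))"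

definition lp_int :: "nat \<Rightarrow> (real \<Rightarrow> real) \<Rightarrow> real \<Rightarrow> (pt \<Rightarrow> real) \<Rightarrow> ennreal" where
  "lp_int K mu p f = line_int K (\<lambda>x. ennreal (\<bar>f x\<bar> powr p * mu (height x))) (tree_pts K)"

definition lp_norm :: "nat \<Rightarrow> (real \<Rightarrow> real) \<Rightarrow> real \<Rightarrow> (pt \<Rightarrow> real) \<Rightarrow> real" where
  "lp_norm K mu p f = enn2real (lp_int K mu p f) powr (1 / p)"

definition upper_gradient :: "nat \<Rightarrow> (real \<Rightarrow> real) \<Rightarrow> (pt \<Rightarrow> real) \<Rightarrow> (pt \<Rightarrow> real) \<Rightarrow> bool" where
  "upper_gradient K lam u g \<longleftrightarrow> (\<forall>x. 0 \<le> g x) \<and> edge_borel K g \<and>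
     (\<forall>y \<in> tree_pts K. \<forall>z \<in> tree_pts K.
        ennreal \<bar>u y - u z\<bar> \<le> line_int K (\<lambda>x. ennreal (g x * lam (height x))) (geod K y z))"

definition N1p :: "nat \<Rightarrow> (real \<Rightarrow> real) \<Rightarrow> (real \<Rightarrow> real) \<Rightarrow> real \<Rightarrow> (pt \<Rightarrow> real) \<Rightarrow> bool" where
  "N1p K lam mu p u \<longleftrightarrow> edge_borel K u \<and> lp_int K mu p u < \<infinity> \<and>
     (\<exists>g. upper_gradient K lam u g \<and> lp_int K mu p g < \<infinity>)"

definition compact_support :: "nat \<Rightarrow> (real \<Rightarrow> real) \<Rightarrow> (pt \<Rightarrow> real) \<Rightarrow> bool" where
  "compact_support K lam u \<longleftrightarrow>
     compactin (tree_top K lam) (tree_top K lam closure_of {x \<in> tree_pts K. u x \<noteq> 0})"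

(* closure of compactly supported functions w.r.t. \<parallel>u\<parallel>_Lp + inf_g \<parallel>g\<parallel>_Lp *)
definition N1p0 :: "nat \<Rightarrow> (real \<Rightarrow> real) \<Rightarrow> (real \<Rightarrow> real) \<Rightarrow> real \<Rightarrow> (pt \<Rightarrow> real) \<Rightarrow> bool" where
  "N1p0 K lam mu p u \<longleftrightarrow> N1p K lam mu p u \<and>
     (\<forall>\<epsilon>>0. \<exists>\<phi>. N1p K lam mu p \<phi> \<and> compact_support K lam \<phi> \<and>
        (\<exists>g. upper_gradient K lam (\<lambda>x. u x - \<phi> x) g \<and>
             lp_int K mu p (\<lambda>x. u x - \<phi> x) < \<infinity> \<and> lp_int K mu p g < \<infinity> \<and>
             lp_norm K mu p (\<lambda>x. u x - \<phi> x) + lp_norm K mu p g < \<epsilon>))"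

(* Cap_p(O); \<integral> g_u^p d\<mu> = inf over upper gradients g of u of \<integral> g^p d\<mu> *)
definition capacity :: "nat \<Rightarrow> (real \<Rightarrow> real) \<Rightarrow> (real \<Rightarrow> real) \<Rightarrow> real \<Rightarrow> pt set \<Rightarrow> ennreal" where
  "capacity K lam mu p S = (INF ug \<in> {(u,g). N1p0 K lam mu p u \<and> (\<forall>x \<in> S. u x = 1) \<and>
                                           upper_gradient K lam u g}. lp_int K mu p (snd ug))"

definition p_parabolic :: "nat \<Rightarrow> (real \<Rightarrow> real) \<Rightarrow> (real \<Rightarrow> real) \<Rightarrow> real \<Rightarrow> bool" where
  "p_parabolic K lam mu p \<longleftrightarrow>
     (\<forall>S. S \<subseteq> tree_pts K \<longrightarrow> compactin (tree_top K lam) S \<longrightarrow> capacity K lam mu p S = 0)"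

definition ball_n :: "nat \<Rightarrow> nat \<Rightarrow> pt set" where
  "ball_n K n = {x \<in> tree_pts K. height x \<le> real n}"

end

theory Submission
  imports Defs
begin


lemma pts_iff: "(v,t) \<in> tree_pts K \<longleftrightarrow> set v \<subseteq> {..<K} \<and> 0 < t \<and> t \<le> 1 \<and> (v = [] \<longrightarrow> t = 1)"
  by (simp add: tree_pts_def)

lemma pts_root: "x \<in> tree_pts K \<Longrightarrow> fst x = [] \<Longrightarrow> x = tree_root"
  by (cases x) (auto simp: tree_pts_def tree_root_def)

lemma root_in: "tree_root \<in> tree_pts K"
  by (simp add: tree_pts_def tree_root_def)

lemma orp_antisym:
  assumes "x \<in> tree_pts K" "y \<in> tree_pts K" "on_root_path x y" "on_root_path y x"
  shows "x = y"
proof (cases "fst x = []")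
  case True
  then have "x = tree_root" using assms pts_root by blast
  moreover have "fst y = []" using assms(4) True by (auto simp: on_root_path_def)
  then have "y = tree_root" using assms pts_root by blast
  ultimately show ?thesis by simp
next
  case False
  then have "fst y \<noteq> []" using assms(3) by (auto simp: on_root_path_def)
  then show ?thesis using assms False
    by (cases x, cases y) (auto simp: on_root_path_def prefix_order.antisym)
qed

lemma len_ge1: "v \<noteq> [] \<Longrightarrow> 1 \<le> real (length v)"
  by (cases v) auto

lemma height_nonneg: "x \<in> tree_pts K \<Longrightarrow> 0 \<le> height x"
  by (cases x) (auto simp: tree_pts_def height_def dest: len_ge1)

lemma prefix_len_less: "prefix a b \<Longrightarrow> a \<noteq> b \<Longrightarrow> length a < length b"
  by (metis prefix_length_le prefix_length_prefix prefix_order.antisym not_le order.strict_iff_order prefix_order.order_refl  le_antisym)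

lemma height_mono:
  assumes "x \<in> tree_pts K" "y \<in> tree_pts K" "on_root_path x y"
  shows "height x \<le> height y"
proof (cases "fst x = []")
  case True
  then have "x = tree_root" using assms pts_root by blast
  then show ?thesis using height_nonneg[OF assms(2)] by (simp add: tree_root_def height_def)
next
  case False
  then have p: "prefix (fst x) (fst y)" "fst x = fst y \<longrightarrow> snd x \<le> snd y"
    using assms(3) by (auto simp: on_root_path_def)
  show ?thesis
  proof (cases "fst x = fst y")
    case True then show ?thesis using p by (simp add: height_def)
  next
    case ne: False
    have "length (fst x) < length (fst y)" using prefix_len_less p ne by blast
    moreover have "snd x \<le> 1" "0 < snd y" using assms by (cases x, cases y, auto simp: tree_pts_def)+
    ultimately show ?thesis by (simp add: height_def)
  qed
qed

lemma geod_sym: "geod K y z = geod K z y"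
  unfolding geod_def by (auto)

lemma branch_unique:
  assumes "m1 \<in> geod K y z - ((root_geod K y - root_geod K z) \<union> (root_geod K z - root_geod K y))"
    and "m2 \<in> geod K y z - ((root_geod K y - root_geod K z) \<union> (root_geod K z - root_geod K y))"
  shows "m1 = m2"
proof -
  have a: "m1 \<in> root_geod K y \<inter> root_geod K z" "\<forall>x \<in> root_geod K y \<inter> root_geod K z. on_root_path x m1"
    using assms(1) unfolding geod_def by auto
  have b: "m2 \<in> root_geod K y \<inter> root_geod K z" "\<forall>x \<in> root_geod K y \<inter> root_geod K z. on_root_path x m2"
    using assms(2) unfolding geod_def by auto
  show ?thesis using a b orp_antisym[of m1 K m2] by (auto simp: root_geod_def)
qed

lemma root_geod_slice:
  assumes "v \<noteq> []"
  shows "(v,t) \<in> root_geod K y \<longleftrightarrow> set v \<subseteq> {..<K} \<and> 0 < t \<and> t \<le> 1 \<and> prefix v (fst y) \<and> (v = fst y \<longrightarrow> t \<le> snd y)"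
  using assms by (auto simp: root_geod_def tree_pts_def on_root_path_def)



definition slice :: "pt set \<Rightarrow> nat list \<Rightarrow> real set" where
  "slice S v = {t. (v,t) \<in> S}"

lemma LI_mono_AE:
  assumes "\<And>v. v \<in> tree_edges K \<Longrightarrow> AE t in lborel. 0 < t \<and> t \<le> 1 \<and> (v,t) \<in> S \<longrightarrow> (v,t) \<in> T"
  shows "line_int K f S \<le> line_int K f T"
  unfolding line_int_def
proof (rule nn_integral_mono)
  fix v assume "v \<in> space (count_space (tree_edges K))"
  then have "v \<in> tree_edges K" by simp
  from assms[OF this] show "(\<integral>\<^sup>+ t. f (v, t) * indicator S (v, t) * indicator {0<..1} t \<partial>lborel)
         \<le> (\<integral>\<^sup>+ t. f (v, t) * indicator T (v, t) * indicator {0<..1} t \<partial>lborel)"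
    by (intro nn_integral_mono_AE) (auto elim!: eventually_mono simp: indicator_def)
qed

lemma LI_empty: "line_int K f {} = 0"
  by (simp add: line_int_def)

lemma LI_mono: "S \<subseteq> T \<Longrightarrow> line_int K f S \<le> line_int K f T"
  by (rule LI_mono_AE) auto

lemma count_space_lower:
  assumes "v \<in> A" shows "g v \<le> (\<integral>\<^sup>+ x. g x \<partial>count_space A)"
proof -
  have "g v = g v * emeasure (count_space A) {v}"
    using assms by (simp add: emeasure_count_space_finite)
  also have "\<dots> = (\<integral>\<^sup>+ x. g x * indicator {v} x \<partial>count_space A)"
    using assms by (subst nn_integral_indicator_singleton) auto
  also have "\<dots> \<le> (\<integral>\<^sup>+ x. g x \<partial>count_space A)"
    by (intro nn_integral_mono) (auto simp: indicator_def)
  finally show ?thesis .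
qed

lemma LI_edge_lower:
  assumes "v \<in> tree_edges K" "0 \<le> a" "b \<le> 1" "\<And>t. a < t \<Longrightarrow> t \<le> b \<Longrightarrow> (v,t) \<in> S"
  shows "(\<integral>\<^sup>+ t. f (v,t) * indicator {a<..b} t \<partial>lborel) \<le> line_int K f S"
proof -
  have "(\<integral>\<^sup>+ t. f (v,t) * indicator {a<..b} t \<partial>lborel)
      \<le> (\<integral>\<^sup>+ t. f (v, t) * indicator S (v, t) * indicator {0<..1} t \<partial>lborel)"
    using assms by (intro nn_integral_mono) (auto simp: indicator_def)
  also have "\<dots> \<le> line_int K f S"
    unfolding line_int_def using assms(1) by (rule count_space_lower)
  finally show ?thesis .
qed

lemma LI_add:
  assumes "\<And>v. v \<in> tree_edges K \<Longrightarrow> (\<lambda>t. f (v,t) * indicator S (v,t) * indicator {0<..1} t) \<in> borel_measurable lborel"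
    and "\<And>v. v \<in> tree_edges K \<Longrightarrow> (\<lambda>t. f (v,t) * indicator T (v,t) * indicator {0<..1} t) \<in> borel_measurable lborel"
  shows "line_int K f (S \<union> T) \<le> line_int K f S + line_int K f T"
proof -
  have "line_int K f (S \<union> T) \<le> (\<integral>\<^sup>+ v. (\<integral>\<^sup>+ t. f (v,t) * indicator S (v,t) * indicator {0<..1} t \<partial>lborel)
      + (\<integral>\<^sup>+ t. f (v,t) * indicator T (v,t) * indicator {0<..1} t \<partial>lborel) \<partial>count_space (tree_edges K))"
    unfolding line_int_def
  proof (rule nn_integral_mono)
    fix v assume "v \<in> space (count_space (tree_edges K))"
    then have v: "v \<in> tree_edges K" by simp
    have "(\<integral>\<^sup>+ t. f (v,t) * indicator (S \<union> T) (v,t) * indicator {0<..1} t \<partial>lborel)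
       \<le> (\<integral>\<^sup>+ t. f (v,t) * indicator S (v,t) * indicator {0<..1} t + f (v,t) * indicator T (v,t) * indicator {0<..1} t \<partial>lborel)"
      by (intro nn_integral_mono) (auto simp: indicator_def)
    also have "\<dots> = (\<integral>\<^sup>+ t. f (v,t) * indicator S (v,t) * indicator {0<..1} t \<partial>lborel)
      + (\<integral>\<^sup>+ t. f (v,t) * indicator T (v,t) * indicator {0<..1} t \<partial>lborel)"
      using assms v by (intro nn_integral_add) auto
    finally show "(\<integral>\<^sup>+ t. f (v,t) * indicator (S \<union> T) (v,t) * indicator {0<..1} t \<partial>lborel)
       \<le> (\<integral>\<^sup>+ t. f (v,t) * indicator S (v,t) * indicator {0<..1} t \<partial>lborel)
      + (\<integral>\<^sup>+ t. f (v,t) * indicator T (v,t) * indicator {0<..1} t \<partial>lborel)" .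
  qed
  also have "\<dots> = line_int K f S + line_int K f T"
    unfolding line_int_def by (intro nn_integral_add) auto
  finally show ?thesis .
qed



locale tl =
  fixes K :: nat and lam :: "real \<Rightarrow> real"
  assumes lam_pos: "\<And>r. 0 \<le> r \<Longrightarrow> 0 < lam r"
    and lam_int: "\<And>R. set_integrable lborel {0..R} lam"
begin

definition hh :: "real \<Rightarrow> real \<Rightarrow> real" where
  "hh R u = indicator {0..R} u *\<^sub>R lam u"

lemma hh_meas[measurable]: "hh R \<in> borel_measurable borel"
proof -
  have "integrable lborel (\<lambda>u. indicator {0..R} u *\<^sub>R lam u)"
    using lam_int[of R] by (simp add: set_integrable_def)
  then have "(\<lambda>u. indicator {0..R} u *\<^sub>R lam u) \<in> borel_measurable lborel"
    by (rule borel_measurable_integrable)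
  then show ?thesis unfolding hh_def by simp
qed

lemma lam_ion: "lam integrable_on {A..B}" if "0 \<le> A" for A B
proof (cases "A \<le> B")
  case True
  have "lam integrable_on {0..B}" using lam_int[of B] by (rule set_borel_integral_eq_integral(1))
  then show ?thesis by (rule integrable_on_subinterval) (use that in auto)
next
  case False then show ?thesis by (simp add: integrable_on_empty)
qed

lemma TR:
  assumes "0 \<le> c + a"
  shows "(\<integral>\<^sup>+ t. ennreal (lam (c + t)) * indicator {a<..b} t \<partial>lborel)
       = (\<integral>\<^sup>+ u. ennreal (lam u) * indicator {c+a<..c+b} u \<partial>lborel)"
proof -
  define f where "f u = ennreal (hh (c+b) u) * indicator {c+a<..c+b} u" for u
  have fm: "f \<in> borel_measurable borel" unfolding f_def by measurable
  have "(\<integral>\<^sup>+ u. f u \<partial>lborel) = ennreal \<bar>1\<bar> * (\<integral>\<^sup>+ x. f (c + 1 * x) \<partial>lborel)"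
    by (rule nn_integral_real_affine[OF fm]) simp
  moreover have "\<And>u. f u = ennreal (lam u) * indicator {c+a<..c+b} u"
    using assms by (auto simp: f_def hh_def indicator_def)
  moreover have "\<And>x. f (c + 1 * x) = ennreal (lam (c + x)) * indicator {a<..b} x"
    using assms by (auto simp: f_def hh_def indicator_def)
  ultimately show ?thesis by simp
qed

lemma VAL:
  assumes "0 \<le> A" "A \<le> B"
  shows "(\<integral>\<^sup>+ u. ennreal (lam u) * indicator {A<..B} u \<partial>lborel) = ennreal (integral {A..B} lam)"
proof -
  have "(\<integral>\<^sup>+ u. ennreal (lam u) * indicator {A<..B} u \<partial>lborel)
      = (\<integral>\<^sup>+ u. ennreal (indicator {A..B} u * lam u) \<partial>lborel)"
  proof (rule nn_integral_cong_AE)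
    show "AE u in lborel. ennreal (lam u) * indicator {A<..B} u = ennreal (indicator {A..B} u * lam u)"
      using AE_lborel_singleton[of A] by (rule eventually_mono) (auto simp: indicator_def)
  qed
  also have "\<dots> = ennreal (integral {A..B} lam)"
  proof (rule nn_integral_has_integral_lebesgue)
    show "\<And>x. x \<in> {A..B} \<Longrightarrow> 0 \<le> lam x" using assms lam_pos by (auto intro: less_imp_le)
    show "(lam has_integral integral {A..B} lam) {A..B}"
      using lam_ion[OF assms(1)] by (simp add: integrable_integral)
  qed
  finally show ?thesis .
qed

lemma POS:
  assumes "0 \<le> A" "A < B"
  shows "0 < (\<integral>\<^sup>+ u. ennreal (lam u) * indicator {A<..B} u \<partial>lborel)"
proof -
  define f where "f u = ennreal (hh B u) * indicator {A<..B} u" for u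
  have fm: "f \<in> borel_measurable lborel" unfolding f_def by measurable
  have feq: "\<And>u. f u = ennreal (lam u) * indicator {A<..B} u"
    using assms by (auto simp: f_def hh_def indicator_def)
  have "{A<..B} \<subseteq> {x \<in> space lborel. f x \<noteq> 0}"
    using assms lam_pos by (auto simp: feq ennreal_eq_0_iff not_le)
  then have "emeasure lborel {A<..B} \<le> emeasure lborel {x \<in> space lborel. f x \<noteq> 0}"
    using fm by (intro emeasure_mono) auto
  moreover have "emeasure lborel {A<..B} > 0" using assms by simp
  ultimately have "emeasure lborel {x \<in> space lborel. f x \<noteq> 0} \<noteq> 0" by auto
  then have "integral\<^sup>N lborel f \<noteq> 0" using nn_integral_0_iff[OF fm] by simp
  then show ?thesis by (simp add: feq[symmetric] zero_less_iff_neq_zero)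
qed

definition Lam where "Lam x = integral {0..x} lam"

lemma Lam_cont: "continuous_on {0..R} Lam"
  unfolding Lam_def by (rule indefinite_integral_continuous_1) (rule lam_ion, simp)

lemma Lam_diff: "0 \<le> A \<Longrightarrow> A \<le> B \<Longrightarrow> integral {A..B} lam = Lam B - Lam A"
  unfolding Lam_def using Henstock_Kurzweil_Integration.integral_combine[where a=0 and c=A and b=B and f=lam] lam_ion[where A=0 and B=B] by simp

lemma EI_val:
  assumes "0 \<le> c + a" "a \<le> b"
  shows "(\<integral>\<^sup>+ t. ennreal (lam (c + t)) * indicator {a<..b} t \<partial>lborel) = ennreal (Lam (c+b) - Lam (c+a))"
  using TR[OF assms(1)] VAL[of "c+a" "c+b"] Lam_diff[of "c+a" "c+b"] assms by simp

lemma EI_pos: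
  assumes "0 \<le> c + a" "a < b"
  shows "0 < (\<integral>\<^sup>+ t. ennreal (lam (c + t)) * indicator {a<..b} t \<partial>lborel)"
  using TR[OF assms(1)] POS[of "c+a" "c+b"] assms by simp

end


lemma slice_Un[simp]: "slice (A \<union> B) v = slice A v \<union> slice B v"
  and slice_Diff[simp]: "slice (A - B) v = slice A v - slice B v"
  by (auto simp: slice_def)

definition Bset :: "nat \<Rightarrow> pt \<Rightarrow> pt \<Rightarrow> pt set" where
  "Bset K y z = geod K y z - ((root_geod K y - root_geod K z) \<union> (root_geod K z - root_geod K y))"

lemma geod_split: "geod K y z = ((root_geod K y - root_geod K z) \<union> (root_geod K z - root_geod K y)) \<union> Bset K y z"
  unfolding Bset_def geod_def by blast

lemma Bset_slice_single: "\<exists>c. \<forall>t. t \<in> slice (Bset K y z) v \<longrightarrow> t = c"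
proof (cases "slice (Bset K y z) v = {}")
  case True then show ?thesis by auto
next
  case False
  then obtain t0 where t0: "(v,t0) \<in> Bset K y z" by (auto simp: slice_def)
  have "\<forall>t. t \<in> slice (Bset K y z) v \<longrightarrow> t = t0"
    using branch_unique[of "(v,t0)" K y z] t0 by (auto simp: slice_def Bset_def)
  then show ?thesis by blast
qed

lemma Bset_slice_fin: "finite (slice (Bset K y z) v)"
proof -
  obtain c where "\<forall>t. t \<in> slice (Bset K y z) v \<longrightarrow> t = c" using Bset_slice_single by blast
  then have "slice (Bset K y z) v \<subseteq> {c}" by auto
  then show ?thesis using finite_subset by blast
qed

lemma slice_rg: "v \<in> tree_edges K \<Longrightarrow> slice (root_geod K y) v \<in> sets borel"
proof -
  assume v: "v \<in> tree_edges K"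
  then have "v \<noteq> []" by (simp add: tree_edges_def)
  then have "slice (root_geod K y) v = (if set v \<subseteq> {..<K} \<and> prefix v (fst y) then
        (if v = fst y then {0<..min 1 (snd y)} else {0<..1}) else {})"
    by (auto simp: slice_def root_geod_slice)
  then show ?thesis by simp
qed

lemma slice_geod: "v \<in> tree_edges K \<Longrightarrow> slice (geod K y z) v \<in> sets borel"
proof -
  assume v: "v \<in> tree_edges K"
  have "slice (Bset K y z) v \<in> sets borel"
    by (rule borel_closed, rule finite_imp_closed, rule Bset_slice_fin)
  then show ?thesis
    using slice_rg[OF v, of y] slice_rg[OF v, of z] by (subst geod_split) auto
qed

context tl
begin

abbreviation LF where "LF \<equiv> (\<lambda>x. ennreal (lam (height x)))"

lemma meas_slice:
  assumes v: "v \<in> tree_edges K" and S: "slice S v \<in> sets borel"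
  shows "(\<lambda>t. LF (v,t) * indicator S (v,t) * indicator {0<..1::real} t) \<in> borel_measurable lborel"
proof -
  define c where "c = real (length v) - 1"
  have c0: "0 \<le> c" using v len_ge1 by (auto simp: c_def tree_edges_def)
  have eq: "(\<lambda>t. LF (v,t) * indicator S (v,t) * indicator {0<..1::real} t)
     = (\<lambda>t. ennreal (hh (c+1) (c+t)) * indicator (slice S v) t * indicator {0<..1::real} t)"
    using c0 by (auto simp: fun_eq_iff height_def c_def hh_def indicator_def slice_def)
  have [measurable]: "slice S v \<in> sets borel" by fact
  show ?thesis unfolding eq by measurable
qed

lemma meas_geod: "v \<in> tree_edges K \<Longrightarrow>
   (\<lambda>t. LF (v,t) * indicator (geod K y z) (v,t) * indicator {0<..1::real} t) \<in> borel_measurable lborel"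
  by (rule meas_slice) (auto intro: slice_geod)

lemma meas_rg: "v \<in> tree_edges K \<Longrightarrow>
   (\<lambda>t. LF (v,t) * indicator (root_geod K y) (v,t) * indicator {0<..1::real} t) \<in> borel_measurable lborel"
  by (rule meas_slice) (auto intro: slice_rg)

lemma edge_fin: "v \<in> tree_edges K \<Longrightarrow> (\<integral>\<^sup>+ t. LF (v,t) * indicator S (v,t) * indicator {0<..1::real} t \<partial>lborel) < \<infinity>"
proof -
  assume v: "v \<in> tree_edges K"
  define c where "c = real (length v) - 1"
  have c0: "0 \<le> c" using v len_ge1 by (auto simp: c_def tree_edges_def)
  have "(\<integral>\<^sup>+ t. LF (v,t) * indicator S (v,t) * indicator {0<..1::real} t \<partial>lborel)
     \<le> (\<integral>\<^sup>+ t. ennreal (lam (c + t)) * indicator {0<..1::real} t \<partial>lborel)"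
    by (intro nn_integral_mono) (auto simp: indicator_def height_def c_def)
  also have "\<dots> = ennreal (Lam (c+1) - Lam (c+0))" using c0 by (intro EI_val) auto
  finally show ?thesis by (simp add: order_le_less_trans)
qed

lemma LI_rg_fin: "line_int K LF (root_geod K y) < \<infinity>"
proof -
  define A where "A = {v \<in> tree_edges K. prefix v (fst y)}"
  have fA: "finite A"
    by (rule finite_subset[of _ "set (prefixes (fst y))"]) (auto simp: A_def)
  have "line_int K LF (root_geod K y) = (\<Sum>v\<in>A. (\<integral>\<^sup>+ t. LF (v,t) * indicator (root_geod K y) (v,t) * indicator {0<..1::real} t \<partial>lborel))"
    unfolding line_int_def
  proof (rule nn_integral_count_space'[OF fA])
    fix v assume "v \<in> tree_edges K" "v \<notin> A"
    then have "\<And>t. (v,t) \<notin> root_geod K y" by (auto simp: A_def tree_edges_def root_geod_slice)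
    then show "(\<integral>\<^sup>+ t. LF (v,t) * indicator (root_geod K y) (v,t) * indicator {0<..1::real} t \<partial>lborel) = 0"
      by simp
  qed (auto simp: A_def)
  also have "\<dots> < \<infinity>" using fA edge_fin by (simp add: ennreal_sum_less_top A_def)
  finally show ?thesis .
qed

lemma LI_add_geod: 
  assumes "\<And>v. v \<in> tree_edges K \<Longrightarrow> slice S v \<in> sets borel" "\<And>v. v \<in> tree_edges K \<Longrightarrow> slice T v \<in> sets borel"
  shows "line_int K LF (S \<union> T) \<le> line_int K LF S + line_int K LF T"
  by (rule LI_add) (auto intro: meas_slice[simplified] assms)

lemma LI_geod_fin: "line_int K LF (geod K y z) < \<infinity>"
proof -
  have "geod K y z \<subseteq> root_geod K y \<union> root_geod K z" unfolding geod_def by auto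
  then have "line_int K LF (geod K y z) \<le> line_int K LF (root_geod K y \<union> root_geod K z)" by (rule LI_mono)
  also have "\<dots> \<le> line_int K LF (root_geod K y) + line_int K LF (root_geod K z)"
    by (rule LI_add_geod) (auto intro: slice_rg)
  also have "\<dots> < \<infinity>" using LI_rg_fin by simp
  finally show ?thesis .
qed

lemma LI_AE_Bset:
  assumes "\<And>p. p \<in> S - Bset K y z \<Longrightarrow> p \<in> T"
  shows "line_int K f S \<le> line_int K f T"
proof (rule LI_mono_AE)
  fix v
  obtain c where c: "\<forall>t. t \<in> slice (Bset K y z) v \<longrightarrow> t = c" using Bset_slice_single by blast
  show "AE t in lborel. 0 < t \<and> t \<le> 1 \<and> (v, t) \<in> S \<longrightarrow> (v, t) \<in> T"
    using AE_lborel_singleton[of c] by (rule eventually_mono) (use c assms in \<open>auto simp: slice_def\<close>)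
qed

lemma LI_zero: "line_int K LF (geod K x x) = 0"
proof -
  have "line_int K LF (geod K x x) \<le> line_int K LF {}"
    by (rule LI_AE_Bset[where y=x and z=x]) (auto simp: Bset_def)
  then show ?thesis by (simp add: LI_empty)
qed

lemma LI_tri: "line_int K LF (geod K x z) \<le> line_int K LF (geod K x y) + line_int K LF (geod K y z)"
proof -
  have "line_int K LF (geod K x z) \<le> line_int K LF (geod K x y \<union> geod K y z)"
    by (rule LI_AE_Bset[where y=x and z=z]) (auto simp: Bset_def geod_def)
  also have "\<dots> \<le> line_int K LF (geod K x y) + line_int K LF (geod K y z)"
    by (rule LI_add_geod) (auto intro: slice_geod)
  finally show ?thesis .
qed

end


lemma SEG:
  assumes x: "x \<in> tree_pts K" and y: "y \<in> tree_pts K" and n: "\<not> on_root_path y x"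
  shows "fst y \<in> tree_edges K \<and> (\<exists>a. 0 \<le> a \<and> a < snd y \<and> snd y \<le> 1 \<and>
     (\<forall>t. a < t \<longrightarrow> t \<le> snd y \<longrightarrow> (fst y, t) \<in> root_geod K y - root_geod K x))"
proof -
  obtain w s where yws: "y = (w,s)" by (cases y)
  have w: "w \<noteq> []" using n by (auto simp: yws on_root_path_def)
  have ys: "set w \<subseteq> {..<K}" "0 < s" "s \<le> 1" using y by (auto simp: yws tree_pts_def)
  have xs: "0 < snd x" using x by (cases x) (auto simp: tree_pts_def)
  define a where "a = (if w = fst x then snd x else 0)"
  have nn: "\<not> prefix w (fst x) \<or> (w = fst x \<and> snd x < s)"
    using n w by (auto simp: yws on_root_path_def)
  have "0 \<le> a" "a < s" using xs ys nn by (auto simp: a_def)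
  moreover have "\<forall>t. a < t \<longrightarrow> t \<le> s \<longrightarrow> (w, t) \<in> root_geod K y - root_geod K x"
    using nn w ys xs by (auto simp: a_def root_geod_slice yws split: if_splits)
  moreover have "w \<in> tree_edges K" using w ys by (simp add: tree_edges_def)
  ultimately show ?thesis using ys by (auto simp: yws)
qed

context tl
begin

lemma LI_pos:
  assumes x: "x \<in> tree_pts K" and y: "y \<in> tree_pts K" and n: "\<not> on_root_path y x"
  shows "0 < line_int K LF (geod K x y)"
proof -
  from SEG[OF x y n] obtain a where w: "fst y \<in> tree_edges K" and a: "0 \<le> a" "a < snd y" "snd y \<le> 1"
    and sub: "\<forall>t. a < t \<longrightarrow> t \<le> snd y \<longrightarrow> (fst y, t) \<in> root_geod K y - root_geod K x" by blast
  define c where "c = real (length (fst y)) - 1"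
  have c0: "0 \<le> c" using w len_ge1 by (auto simp: c_def tree_edges_def)
  have "0 < (\<integral>\<^sup>+ t. ennreal (lam (c + t)) * indicator {a<..snd y} t \<partial>lborel)"
    using c0 a by (intro EI_pos) auto
  also have "\<dots> = (\<integral>\<^sup>+ t. LF (fst y, t) * indicator {a<..snd y} t \<partial>lborel)"
    by (simp add: height_def c_def)
  also have "\<dots> \<le> line_int K LF (geod K x y)"
    by (rule LI_edge_lower[OF w a(1) a(3)]) (use sub in \<open>auto simp: geod_def\<close>)
  finally show ?thesis .
qed

lemma MS: "Metric_space (tree_pts K) (tree_dist K lam)"
proof
  fix x y z
  show "0 \<le> tree_dist K lam x y" by (simp add: tree_dist_def)
  show "tree_dist K lam x y = tree_dist K lam y x" by (simp add: tree_dist_def geod_sym)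
  assume x: "x \<in> tree_pts K" and y: "y \<in> tree_pts K"
  show "(tree_dist K lam x y = 0) = (x = y)"
  proof
    assume d0: "tree_dist K lam x y = 0"
    show "x = y"
    proof (rule ccontr)
      assume "x \<noteq> y"
      then have "\<not> on_root_path y x \<or> \<not> on_root_path x y" using orp_antisym x y by blast
      then have "0 < line_int K LF (geod K x y)"
        using LI_pos[OF x y] LI_pos[OF y x] geod_sym by metis
      then have "0 < tree_dist K lam x y"
        using LI_geod_fin by (simp add: tree_dist_def enn2real_positive_iff)
      with d0 show False by simp
    qed
  next
    assume "x = y" then show "tree_dist K lam x y = 0" by (simp add: tree_dist_def LI_zero)
  qed
  assume z: "z \<in> tree_pts K"
  have "tree_dist K lam x z \<le> enn2real (line_int K LF (geod K x y) + line_int K LF (geod K y z))"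
    unfolding tree_dist_def using LI_tri LI_geod_fin by (intro enn2real_mono) auto
  also have "\<dots> = tree_dist K lam x y + tree_dist K lam y z"
    unfolding tree_dist_def using LI_geod_fin by (intro enn2real_plus) auto
  finally show "tree_dist K lam x z \<le> tree_dist K lam x y + tree_dist K lam y z" .
qed

end

sublocale tl \<subseteq> M: Metric_space "tree_pts K" "tree_dist K lam"
  by (rule MS)

context tl
begin
lemma top_eq: "tree_top K lam = M.mtopology"
  by (simp add: tree_top_def)
end



context tl
begin

definition UU :: "nat \<Rightarrow> pt set" where "UU n = {x \<in> tree_pts K. height x < real n}"

lemma UU_open: "openin (tree_top K lam) (UU n)"
  unfolding top_eq M.openin_mtopology
proof (intro conjI allI impI)
  show "UU n \<subseteq> tree_pts K" by (auto simp: UU_def)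
  fix x assume xU: "x \<in> UU n"
  then have x: "x \<in> tree_pts K" and hx: "height x < real n" by (auto simp: UU_def)
  have n1: "1 \<le> n" using height_nonneg[OF x] hx by simp
  define c where "c = real n - 1"
  define b where "b = max 0 (height x - real n + 1)"
  define E where "E = (\<integral>\<^sup>+ t. ennreal (lam (c + t)) * indicator {b<..1} t \<partial>lborel)"
  have c0: "0 \<le> c" using n1 by (simp add: c_def)
  have b: "0 \<le> b" "b < 1" using hx by (auto simp: b_def)
  have Epos: "0 < E" unfolding E_def using c0 b by (intro EI_pos) auto
  have Efin: "E < \<infinity>" unfolding E_def using c0 b by (subst EI_val) auto
  define r where "r = enn2real E"
  have r0: "0 < r" using Epos Efin by (simp add: r_def enn2real_positive_iff)
  show "\<exists>r>0. M.mball x r \<subseteq> UU n"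
  proof (intro exI conjI subsetI)
    show "0 < r" by fact
    fix y assume "y \<in> M.mball x r"
    then have y: "y \<in> tree_pts K" and dxy: "tree_dist K lam x y < r" by auto
    show "y \<in> UU n"
    proof (rule ccontr)
      assume "y \<notin> UU n"
      then have hy: "real n \<le> height y" using y by (auto simp: UU_def)
      obtain u s where yus: "y = (u,s)" by (cases y)
      have ys: "set u \<subseteq> {..<K}" "0 < s" "s \<le> 1" "u = [] \<longrightarrow> s = 1" using y by (auto simp: yus tree_pts_def)
      have lu: "n \<le> length u" using hy ys by (simp add: yus height_def)
      define w where "w = take n u"
      have lw: "length w = n" using lu by (simp add: w_def)
      have we: "w \<in> tree_edges K" using lw n1 ys set_take_subset[of n u]
        by (auto simp: tree_edges_def w_def)
      have sub: "(w,t) \<in> geod K x y" if t: "b < t" "t \<le> 1" for t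
      proof -
        have t0: "0 < t" using t b by simp
        have "(w,t) \<in> root_geod K y"
        proof -
          have "w = u \<Longrightarrow> t \<le> s"
          proof -
            assume "w = u"
            then have "length u = n" using lw by simp
            then have "1 \<le> s" using hy by (simp add: yus height_def)
            then show ?thesis using t by simp
          qed
          moreover have "w \<noteq> []" "set w \<subseteq> {..<K}" using we by (auto simp: tree_edges_def)
          moreover have "prefix w (fst y)" by (simp add: yus w_def take_is_prefix)
          ultimately show ?thesis using t0 t
            by (subst root_geod_slice) (auto simp: yus)
        qed
        moreover have "(w,t) \<notin> root_geod K x"
        proof
          assume "(w,t) \<in> root_geod K x"
          then have "height (w,t) \<le> height x" using height_mono[OF _ x] by (auto simp: root_geod_def)
          moreover have "height x < height (w,t)"
          proof -
            have "height x - real n + 1 \<le> b" by (simp add: b_def)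
            then show ?thesis using t lw by (simp add: height_def)
          qed
          ultimately show False by simp
        qed
        ultimately show ?thesis unfolding geod_def by blast
      qed
      have "E = (\<integral>\<^sup>+ t. LF (w, t) * indicator {b<..1} t \<partial>lborel)"
        by (simp add: E_def height_def lw c_def)
      also have "\<dots> \<le> line_int K LF (geod K x y)"
        by (rule LI_edge_lower[OF we b(1)]) (use sub in auto)
      finally have "r \<le> tree_dist K lam x y"
        unfolding r_def tree_dist_def using LI_geod_fin by (intro enn2real_mono) auto
      with dxy show False by simp
    qed
  qed
qed

lemma compact_bounded:
  assumes "compactin (tree_top K lam) S"
  shows "\<exists>m. S \<subseteq> ball_n K m"
proof -
  have St: "S \<subseteq> tree_pts K" using compactin_subset_topspace[OF assms] by (simp add: top_eq)
  have cov: "S \<subseteq> \<Union> (range UU)"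
  proof
    fix x assume "x \<in> S"
    then have x: "x \<in> tree_pts K" using St by auto
    obtain n where "height x < real n" using reals_Archimedean2 by blast
    then show "x \<in> \<Union> (range UU)" using x by (auto simp: UU_def)
  qed
  have opn: "\<forall>U\<in>range UU. openin (tree_top K lam) U" using UU_open by auto
  have cmp: "\<forall>U. (\<forall>u\<in>U. openin (tree_top K lam) u) \<and> S \<subseteq> \<Union>U \<longrightarrow> (\<exists>F. finite F \<and> F \<subseteq> U \<and> S \<subseteq> \<Union>F)"
    using assms by (simp add: compactin_def)
  have "\<exists>F. finite F \<and> F \<subseteq> range UU \<and> S \<subseteq> \<Union>F"
    by (rule cmp[rule_format]) (use opn cov in auto)
  then obtain F where F: "finite F" "F \<subseteq> range UU" "S \<subseteq> \<Union>F" by auto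
  then obtain N where N: "finite N" "F = UU ` N" using finite_subset_image[of F UU UNIV] by blast
  define m where "m = Max (insert 0 N)"
  have sub: "\<And>n. n \<in> N \<Longrightarrow> UU n \<subseteq> ball_n K m"
  proof -
    fix n assume "n \<in> N"
    then have "n \<le> m" using N by (simp add: m_def)
    then show "UU n \<subseteq> ball_n K m" by (auto simp: UU_def ball_n_def)
  qed
  have "S \<subseteq> ball_n K m" using F(3) sub unfolding N(2) by auto
  then show ?thesis by (rule exI)
qed

end


definition phi :: "nat list \<Rightarrow> real \<Rightarrow> pt" where
  "phi w s = (if s \<le> 0 then (butlast w, 1) else (w, s))"

lemma prefix_butlast_iff: "w \<noteq> [] \<Longrightarrow> prefix u (butlast w) \<longleftrightarrow> prefix u w \<and> u \<noteq> w"
proof -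
  assume w: "w \<noteq> []"
  then have weq: "w = butlast w @ [last w]" by simp
  have "prefix u w \<longleftrightarrow> u = w \<or> prefix u (butlast w)"
    by (subst (1 2) weq) (simp add: prefix_snoc)
  moreover have "u \<noteq> w" if h: "prefix u (butlast w)"
  proof
    assume "u = w"
    then have "length w \<le> length (butlast w)" using h prefix_length_le by blast
    moreover have "0 < length w" using w by simp
    moreover have "length (butlast w) = length w - 1" by simp
    ultimately show False by arith
  qed
  ultimately show ?thesis by blast
qed

lemma phi_pts: "w \<in> tree_edges K \<Longrightarrow> 0 \<le> s \<Longrightarrow> s \<le> 1 \<Longrightarrow> phi w s \<in> tree_pts K"
  by (auto simp: phi_def tree_pts_def tree_edges_def dest: in_set_butlastD)

lemma phi_diff:
  assumes w: "w \<in> tree_edges K" and s: "0 \<le> s" "s \<le> s'" "s' \<le> 1"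
    and p: "p \<in> (root_geod K (phi w s) - root_geod K (phi w s')) \<union> (root_geod K (phi w s') - root_geod K (phi w s))"
  shows "fst p = w \<and> s < snd p \<and> snd p \<le> s'"
proof -
  have wne: "w \<noteq> []" using w by (simp add: tree_edges_def)
  obtain u t where put: "p = (u,t)" by (cases p)
  have pp: "p \<in> tree_pts K" using p by (auto simp: root_geod_def)
  then have t: "0 < t" "t \<le> 1" "u = [] \<longrightarrow> t = 1" by (auto simp: put tree_pts_def)
  have une: "u \<noteq> []"
    using p by (auto simp: root_geod_def on_root_path_def put)
  show ?thesis
  proof (cases "s' \<le> 0")
    case True
    then have "s \<le> 0" using s by simp
    then have "phi w s = phi w s'" using True by (simp add: phi_def)
    then show ?thesis using p by auto
  next
    case s'0: False
    show ?thesis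
    proof (cases "s \<le> 0")
      case True
      then have e1: "phi w s = (butlast w, 1)" and e2: "phi w s' = (w, s')" using s'0 by (auto simp: phi_def)
      show ?thesis using p une t wne True
        by (auto simp: e1 e2 put root_geod_def on_root_path_def prefix_butlast_iff)
    next
      case False
      then have e1: "phi w s = (w, s)" and e2: "phi w s' = (w, s')" using s'0 by (auto simp: phi_def)
      show ?thesis using p une t wne s
        by (auto simp: e1 e2 put root_geod_def on_root_path_def)
    qed
  qed
qed

context tl
begin

lemma LI_phi:
  assumes w: "w \<in> tree_edges K" and s: "0 \<le> s" "s \<le> s'" "s' \<le> 1"
  shows "line_int K LF (geod K (phi w s) (phi w s')) \<le> ennreal (Lam (real (length w) - 1 + s') - Lam (real (length w) - 1 + s))"
proof -
  define c where "c = real (length w) - 1"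
  have c0: "0 \<le> c" using w len_ge1 by (auto simp: c_def tree_edges_def)
  define T where "T = {p. fst p = w \<and> s < snd p \<and> snd p \<le> s'}"
  have "line_int K LF (geod K (phi w s) (phi w s')) \<le> line_int K LF T"
  proof (rule LI_AE_Bset[where y="phi w s" and z="phi w s'"])
    fix p assume "p \<in> geod K (phi w s) (phi w s') - Bset K (phi w s) (phi w s')"
    then have "p \<in> (root_geod K (phi w s) - root_geod K (phi w s')) \<union> (root_geod K (phi w s') - root_geod K (phi w s))"
      using geod_split by blast
    then show "p \<in> T" using phi_diff[OF w s] by (auto simp: T_def)
  qed
  also have "line_int K LF T = (\<Sum>v\<in>{w}. (\<integral>\<^sup>+ t. LF (v,t) * indicator T (v,t) * indicator {0<..1::real} t \<partial>lborel))"
    unfolding line_int_def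
    by (rule nn_integral_count_space') (use w in \<open>auto simp: T_def\<close>)
  also have "\<dots> \<le> (\<integral>\<^sup>+ t. ennreal (lam (c + t)) * indicator {s<..s'} t \<partial>lborel)"
    by (auto intro!: nn_integral_mono simp: T_def indicator_def height_def c_def)
  also have "\<dots> = ennreal (Lam (c + s') - Lam (c + s))"
    using c0 s by (intro EI_val) auto
  finally show ?thesis by (simp add: c_def)
qed

lemma dist_phi:
  assumes w: "w \<in> tree_edges K" and s: "0 \<le> s" "s \<le> 1" "0 \<le> s'" "s' \<le> 1"
  shows "tree_dist K lam (phi w s) (phi w s') \<le> \<bar>Lam (real (length w) - 1 + s') - Lam (real (length w) - 1 + s)\<bar>"
proof -
  have gen: "tree_dist K lam (phi w a) (phi w b) \<le> \<bar>Lam (real (length w) - 1 + b) - Lam (real (length w) - 1 + a)\<bar>"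
    if "0 \<le> a" "a \<le> b" "b \<le> 1" for a b
  proof -
    have "tree_dist K lam (phi w a) (phi w b) \<le> enn2real (ennreal (Lam (real (length w) - 1 + b) - Lam (real (length w) - 1 + a)))"
      unfolding tree_dist_def using LI_phi[OF w that] by (intro enn2real_mono) auto
    also have "\<dots> \<le> \<bar>Lam (real (length w) - 1 + b) - Lam (real (length w) - 1 + a)\<bar>"
      by (cases "0 \<le> Lam (real (length w) - 1 + b) - Lam (real (length w) - 1 + a)") (auto simp: ennreal_neg)
    finally show ?thesis .
  qed
  show ?thesis
  proof (cases "s \<le> s'")
    case True then show ?thesis using gen s by auto
  next
    case False
    then have "tree_dist K lam (phi w s') (phi w s) \<le> \<bar>Lam (real (length w) - 1 + s) - Lam (real (length w) - 1 + s')\<bar>"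
      using gen s by auto
    then show ?thesis by (simp add: M.commute abs_minus_commute)
  qed
qed

lemma phi_cont:
  assumes w: "w \<in> tree_edges K"
  shows "continuous_map (top_of_set {0..1}) (tree_top K lam) (phi w)"
  unfolding top_eq M.continuous_map_to_metric
proof (intro ballI allI impI)
  fix s :: real and e :: real
  assume "s \<in> topspace (top_of_set {0..1})" and e: "0 < e"
  then have s: "0 \<le> s" "s \<le> 1" by auto
  define c where "c = real (length w) - 1"
  have c0: "0 \<le> c" using w len_ge1 by (auto simp: c_def tree_edges_def)
  have "continuous_on {0..c+1} Lam" by (rule Lam_cont)
  moreover have "c + s \<in> {0..c+1}" using s c0 by auto
  ultimately obtain d where d: "0 < d" "\<forall>x'\<in>{0..c+1}. dist x' (c+s) < d \<longrightarrow> dist (Lam x') (Lam (c+s)) < e"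
    using e unfolding continuous_on_iff by blast
  show "\<exists>U. openin (top_of_set {0..1}) U \<and> s \<in> U \<and> (\<forall>y\<in>U. phi w y \<in> M.mball (phi w s) e)"
  proof (intro exI conjI ballI)
    show "openin (top_of_set {0..1}) ({0..1} \<inter> ball s d)"
      by (simp add: openin_open_Int)
    show "s \<in> {0..1} \<inter> ball s d" using s d by auto
    fix y assume y: "y \<in> {0..1} \<inter> ball s d"
    then have y01: "0 \<le> y" "y \<le> 1" and yd: "dist y s < d" by (auto simp: dist_commute)
    have "dist (c + y) (c + s) < d" using yd by (simp add: dist_real_def)
    moreover have "c + y \<in> {0..c+1}" using y01 c0 by auto
    ultimately have "dist (Lam (c+y)) (Lam (c+s)) < e" using d by blast
    then have "\<bar>Lam (c + y) - Lam (c + s)\<bar> < e" by (simp add: dist_real_def)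
    moreover have "tree_dist K lam (phi w s) (phi w y) \<le> \<bar>Lam (c + y) - Lam (c + s)\<bar>"
      using dist_phi[OF w s y01] by (simp add: c_def)
    ultimately show "phi w y \<in> M.mball (phi w s) e"
      using phi_pts[OF w] s y01 by auto
  qed
qed

end


lemma cap_mono: "S \<subseteq> T \<Longrightarrow> capacity K lam mu p S \<le> capacity K lam mu p T"
  unfolding capacity_def by (rule INF_superset_mono) auto

context tl
begin

lemma ball_eq: "ball_n K n = {tree_root} \<union> \<Union> ((\<lambda>w. phi w ` {0..1}) ` {w. set w \<subseteq> {..<K} \<and> w \<noteq> [] \<and> length w \<le> n})"
proof (intro equalityI subsetI)
  fix x assume x: "x \<in> ball_n K n"
  obtain u t where xut: "x = (u,t)" by (cases x)
  have xp: "x \<in> tree_pts K" and hx: "height x \<le> real n" using x by (auto simp: ball_n_def)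
  have t: "set u \<subseteq> {..<K}" "0 < t" "t \<le> 1" "u = [] \<longrightarrow> t = 1" using xp by (auto simp: xut tree_pts_def)
  show "x \<in> {tree_root} \<union> \<Union> ((\<lambda>w. phi w ` {0..1}) ` {w. set w \<subseteq> {..<K} \<and> w \<noteq> [] \<and> length w \<le> n})"
  proof (cases "u = []")
    case True then show ?thesis using t by (simp add: xut tree_root_def)
  next
    case False
    have "real (length u) < real n + 1" using hx t by (simp add: xut height_def)
    then have "length u \<le> n" by linarith
    moreover have "x = phi u t" using t by (simp add: xut phi_def)
    ultimately show ?thesis using False t by auto
  qed
next
  fix x assume "x \<in> {tree_root} \<union> \<Union> ((\<lambda>w. phi w ` {0..1}) ` {w. set w \<subseteq> {..<K} \<and> w \<noteq> [] \<and> length w \<le> n})"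
  then consider "x = tree_root" | w s where "set w \<subseteq> {..<K}" "w \<noteq> []" "length w \<le> n" "0 \<le> s" "s \<le> 1" "x = phi w s"
    by auto
  then show "x \<in> ball_n K n"
  proof cases
    case 1 then show ?thesis by (simp add: ball_n_def tree_pts_def tree_root_def height_def)
  next
    case 2
    have we: "w \<in> tree_edges K" using 2 by (simp add: tree_edges_def)
    have "x \<in> tree_pts K" using phi_pts[OF we 2(4,5)] 2 by simp
    moreover have "height x \<le> real n"
    proof (cases "s \<le> 0")
      case True
      have "length (butlast w) \<le> n" using 2 by simp
      then show ?thesis using True 2 by (simp add: phi_def height_def)
    next
      case False
      have "real (length w) \<le> real n" using 2 by simp
      then show ?thesis using False 2 by (simp add: phi_def height_def)
    qed
    ultimately show ?thesis by (simp add: ball_n_def)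
  qed
qed

lemma ball_compact: "compactin (tree_top K lam) (ball_n K n)"
proof -
  define E where "E = {w. set w \<subseteq> {..<K} \<and> w \<noteq> [] \<and> length w \<le> n}"
  have fE: "finite E"
    by (rule finite_subset[OF _ finite_lists_length_le[of "{..<K}" n]]) (auto simp: E_def)
  have c01: "compactin (top_of_set {0..1}) {0..1::real}"
    by (simp add: compactin_subtopology)
  have "compactin (tree_top K lam) (phi w ` {0..1})" if "w \<in> E" for w
  proof (rule image_compactin[OF c01])
    show "continuous_map (top_of_set {0..1}) (tree_top K lam) (phi w)"
      using that by (intro phi_cont) (simp add: E_def tree_edges_def)
  qed
  then have "compactin (tree_top K lam) (\<Union> ((\<lambda>w. phi w ` {0..1}) ` E))"
    using fE by (intro compactin_Union) auto
  moreover have "compactin (tree_top K lam) {tree_root}"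
    by (simp add: top_eq root_in)
  ultimately have "compactin (tree_top K lam) ({tree_root} \<union> \<Union> ((\<lambda>w. phi w ` {0..1}) ` E))"
    by (rule compactin_Un[rotated])
  then show ?thesis by (simp add: ball_eq E_def)
qed

end

theorem lemma3p1:
  fixes K :: nat and p :: real and lam mu :: "real \<Rightarrow> real"
  assumes "K \<ge> 1" and "1 < p"
    and "\<forall>r \<ge> 0. lam r > 0" and "\<forall>r \<ge> 0. mu r > 0"
    and "\<forall>R. set_integrable lborel {0..R} lam"
    and "\<forall>R. set_integrable lborel {0..R} mu"
    and "\<forall>R. set_integrable lborel {0..R} (\<lambda>r. (lam r powr p / mu r) powr (1 / (p - 1)))"
  shows "p_parabolic K lam mu p \<longleftrightarrow> (\<forall>n::nat. capacity K lam mu p (ball_n K n) = 0)"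
proof -
  interpret tl K lam using assms(3,5) by unfold_locales auto
  show ?thesis
  proof
    assume "p_parabolic K lam mu p"
    then show "\<forall>n::nat. capacity K lam mu p (ball_n K n) = 0"
      unfolding p_parabolic_def using ball_compact by (auto simp: ball_n_def)
  next
    assume H: "\<forall>n::nat. capacity K lam mu p (ball_n K n) = 0"
    show "p_parabolic K lam mu p"
      unfolding p_parabolic_def
    proof (intro allI impI)
      fix S assume "S \<subseteq> tree_pts K" "compactin (tree_top K lam) S"
      then obtain m where "S \<subseteq> ball_n K m" using compact_bounded by blast
      then have "capacity K lam mu p S \<le> capacity K lam mu p (ball_n K m)" by (rule cap_mono)
      then show "capacity K lam mu p S = 0" using H by simp
    qed
  qed
qed


end
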